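(* Let $\mathcal H$ be a finite-dimensional Hilbert space and $\mathscr L\in\mathcal L(\mathcal L(\mathcal H))$ such that $e^{t\mathscr L}$ is completely positive for all $t\in\mathbb R$. Then the minimal presentation of $\mathscr L$ has $\Psi=0$, i.e., $\mathscr L\rho=-(G\rho+\rho G)-i(H\rho-\rho H)$ for some hermitian $G,H$ with $\operatorname{Tr}H=0$. If in addition $e^{t\mathscr L}$ is trace non-increasing for all $t\in\mathbb R$, then also $G=0$, so that $e^{t\mathscr L}\rho=e^{-itH}\rho\,e^{itH}$ for all $t$ and $\rho$.
   Context: CP (completely positive) means: for every $N\ge1$, $\Lambda\otimes\mathrm{Id}_{\mathcal L(\mathbb C^N)}$ maps positive semidefinite operators to positive semidefinite operators. A minimal presentation of $\mathscr L$ is a representation $\mathscr L\rho=\Psi\rho-(G\rho+\rho G)-i(H\rho-\rho H)$ with $\Psi$ CP, $G,H$ hermitian, $\operatorname{Tr}H=0$ and the Jamiołkowski transform $\mathfrak J\Psi$ supported on the trace-zero operators (it annihilates $\mathrm{Id}_{\mathcal H}$ and has range in $\{A:\operatorname{Tr}A=0\}$), where $\mathfrak J\Psi$ is the operator on $\mathcal L(\mathcal H)$ with $\langle m\overline k,(\mathfrak J\Psi)(n\overline h)\rangle=\langle m\overline n,\Psi(k\overline h)\rangle$ for all $m,n,h,k\in\mathcal H$, using the Hilbert–Schmidt inner product and $k\overline h:x\mapsto k\langle h,x\rangle$. Trace non-increasing means $\operatorname{Tr}\Lambda\rho\le\operatorname{Tr}\rho$ for positive semidefinite $\rho$. *)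

theory Defs
  imports "HOL-Analysis.Analysis" "HOL-Library.Complex_Order"
begin

text \<open>The finite-dimensional Hilbert space is complex^'n (any finite index type 'n);
  operators on it are matrices complex^'n^'n; superoperators are maps on matrices.
  The order on complex numbers is the partial order of HOL-Library.Complex_Order
  (a \<le> b iff Re a \<le> Re b and Im a = Im b).\<close>

type_synonym 'n cmat = "complex^'n^'n"

definition cscale :: "complex \<Rightarrow> 'n::finite cmat \<Rightarrow> 'n cmat" where
  "cscale c X = (\<chi> i j. c * X$i$j)"

definition mat_adj :: "'n::finite cmat \<Rightarrow> 'n cmat" where
  "mat_adj A = (\<chi> i j. cnj (A$j$i))"

definition hermitian :: "'n::finite cmat \<Rightarrow> bool" where
  "hermitian A \<longleftrightarrow> mat_adj A = A"

definition psd :: "'n::finite cmat \<Rightarrow> bool" where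
  "psd A \<longleftrightarrow> (\<forall>x::complex^'n. 0 \<le> (\<Sum>i\<in>UNIV. \<Sum>j\<in>UNIV. cnj (x$i) * A$i$j * x$j))"

definition clinear_sop :: "('n::finite cmat \<Rightarrow> 'n cmat) \<Rightarrow> bool" where
  "clinear_sop L \<longleftrightarrow> (\<forall>X Y. L (X + Y) = L X + L Y) \<and> (\<forall>c X. L (cscale c X) = cscale c (L X))"

text \<open>An operator on complex^'n \<otimes> complex^N is represented as an N x N block matrix
  X a b (a, b < N) of operators on complex^'n; positivity of such an operator:\<close>
definition block_psd :: "nat \<Rightarrow> (nat \<Rightarrow> nat \<Rightarrow> 'n::finite cmat) \<Rightarrow> bool" where
  "block_psd N X \<longleftrightarrow> (\<forall>v :: nat \<Rightarrow> complex^'n.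
      0 \<le> (\<Sum>a<N. \<Sum>b<N. \<Sum>i\<in>UNIV. \<Sum>j\<in>UNIV. cnj (v a $ i) * X a b $ i $ j * v b $ j))"

text \<open>Complete positivity: \<Lambda> \<otimes> Id acts blockwise on block matrices.\<close>
definition completely_positive :: "('n::finite cmat \<Rightarrow> 'n cmat) \<Rightarrow> bool" where
  "completely_positive \<Lambda> \<longleftrightarrow>
     (\<forall>N::nat. N \<ge> 1 \<longrightarrow> (\<forall>X. block_psd N X \<longrightarrow> block_psd N (\<lambda>a b. \<Lambda> (X a b))))"

definition trace_nonincreasing :: "('n::finite cmat \<Rightarrow> 'n cmat) \<Rightarrow> bool" where
  "trace_nonincreasing \<Lambda> \<longleftrightarrow> (\<forall>\<rho>. psd \<rho> \<longrightarrow> trace (\<Lambda> \<rho>) \<le> trace \<rho>)"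

definition sop_exp :: "real \<Rightarrow> ('n::finite cmat \<Rightarrow> 'n cmat) \<Rightarrow> 'n cmat \<Rightarrow> 'n cmat" where
  "sop_exp t L X = (\<Sum>k. (t ^ k / fact k) *\<^sub>R (L ^^ k) X)"

primrec mat_pow :: "'n::finite cmat \<Rightarrow> nat \<Rightarrow> 'n cmat" where
  "mat_pow A 0 = mat 1"
| "mat_pow A (Suc k) = A ** mat_pow A k"

definition mat_exp :: "'n::finite cmat \<Rightarrow> 'n cmat" where
  "mat_exp A = (\<Sum>k. (1 / fact k) *\<^sub>R mat_pow A k)"

definition mat_unit :: "'n::finite \<Rightarrow> 'n \<Rightarrow> 'n cmat" where
  "mat_unit a b = (\<chi> i j. if i = a \<and> j = b then 1 else 0)"

text \<open>Jamiolkowski transform, written in the standard basis: with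
  m = e_a, k = e_b, n = e_c, h = e_d the defining identity
  <m kbar, (J\<Psi>)(n hbar)> = <m nbar, \<Psi>(k hbar)> reads
  ((J\<Psi>)(E_cd))_ab = (\<Psi>(E_bd))_ac; extended linearly.\<close>
definition jamiolkowski :: "('n::finite cmat \<Rightarrow> 'n cmat) \<Rightarrow> 'n cmat \<Rightarrow> 'n cmat" where
  "jamiolkowski \<Psi> X = (\<chi> a b. \<Sum>c\<in>UNIV. \<Sum>d\<in>UNIV. X$c$d * \<Psi> (mat_unit b d) $ a $ c)"

definition supported_trace_zero :: "('n::finite cmat \<Rightarrow> 'n cmat) \<Rightarrow> bool" where
  "supported_trace_zero T \<longleftrightarrow> T (mat 1) = 0 \<and> (\<forall>X. trace (T X) = 0)"

definition minimal_presentation ::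
  "('n::finite cmat \<Rightarrow> 'n cmat) \<Rightarrow> ('n cmat \<Rightarrow> 'n cmat) \<Rightarrow> 'n cmat \<Rightarrow> 'n cmat \<Rightarrow> bool" where
  "minimal_presentation L \<Psi> G H \<longleftrightarrow>
     clinear_sop \<Psi> \<and> completely_positive \<Psi> \<and> hermitian G \<and> hermitian H \<and> trace H = 0 \<and>
     supported_trace_zero (jamiolkowski \<Psi>) \<and>
     (\<forall>\<rho>. L \<rho> = \<Psi> \<rho> - (G ** \<rho> + \<rho> ** G) - cscale \<i> (H ** \<rho> - \<rho> ** H))"

end

theory Submission
  imports Defs
begin


typedef (overloaded) ('n::finite) sop = "UNIV :: ('n cmat \<Rightarrow>\<^sub>L 'n cmat) set"
  morphisms sop_rep Sop by simp

setup_lifting type_definition_sop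

lemma sop_nontriv: "(0::'n::finite cmat \<Rightarrow>\<^sub>L 'n cmat) \<noteq> id_blinfun"
proof
  assume h: "(0::'n cmat \<Rightarrow>\<^sub>L 'n cmat) = id_blinfun"
  have "blinfun_apply (0::'n cmat \<Rightarrow>\<^sub>L 'n cmat) (mat 1) = mat 1" by (subst h) simp
  moreover have "blinfun_apply (0::'n cmat \<Rightarrow>\<^sub>L 'n cmat) (mat 1) = 0" by simp
  ultimately have "(0::'n cmat) = mat 1" by simp
  then have "(mat 1 :: 'n cmat) $ undefined $ undefined = 0" by (metis zero_index)
  then show False by (simp add: mat_def)
qed

instantiation sop :: (finite) real_normed_algebra_1
begin
lift_definition zero_sop :: "'a sop" is 0 .
lift_definition one_sop :: "'a sop" is id_blinfun .
lift_definition plus_sop :: "'a sop \<Rightarrow> 'a sop \<Rightarrow> 'a sop" is "(+)" .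
lift_definition minus_sop :: "'a sop \<Rightarrow> 'a sop \<Rightarrow> 'a sop" is "(-)" .
lift_definition uminus_sop :: "'a sop \<Rightarrow> 'a sop" is uminus .
lift_definition times_sop :: "'a sop \<Rightarrow> 'a sop \<Rightarrow> 'a sop" is "(o\<^sub>L)" .
lift_definition scaleR_sop :: "real \<Rightarrow> 'a sop \<Rightarrow> 'a sop" is scaleR .
lift_definition norm_sop :: "'a sop \<Rightarrow> real" is norm .
definition dist_sop :: "'a sop \<Rightarrow> 'a sop \<Rightarrow> real" where "dist_sop a b = norm (a - b)"
definition sgn_sop :: "'a sop \<Rightarrow> 'a sop" where "sgn_sop x = scaleR (inverse (norm x)) x"
definition uniformity_sop :: "('a sop \<times> 'a sop) filter" where
  "uniformity_sop = (INF e\<in>{0 <..}. principal {(x, y). dist x y < e})"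
definition open_sop :: "'a sop set \<Rightarrow> bool" where
  "open_sop S = (\<forall>x\<in>S. \<forall>\<^sub>F (x', y) in uniformity. x' = x \<longrightarrow> y \<in> S)"
instance
proof
  fix a b c :: "'a sop" and r s :: real
  show "a + b + c = a + (b + c)" by transfer (simp add: algebra_simps)
  show "a + b = b + a" by transfer (simp add: algebra_simps)
  show "0 + a = a" by transfer simp
  show "- a + a = 0" by transfer simp
  show "a - b = a + - b" by transfer simp
  show "r *\<^sub>R (a + b) = r *\<^sub>R a + r *\<^sub>R b" by transfer (simp add: algebra_simps)
  show "(r + s) *\<^sub>R a = r *\<^sub>R a + s *\<^sub>R a" by transfer (simp add: algebra_simps)
  show "r *\<^sub>R s *\<^sub>R a = (r * s) *\<^sub>R a" by transfer simp
  show "1 *\<^sub>R a = a" by transfer simp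
  show "dist a b = norm (a - b)" by (simp add: dist_sop_def)
  show "sgn a = inverse (norm a) *\<^sub>R a" by (simp add: sgn_sop_def)
  show "(uniformity :: ('a sop \<times> 'a sop) filter) = (INF e\<in>{0 <..}. principal {(x, y). dist x y < e})"
    by (simp add: uniformity_sop_def)
  show "\<And>U::'a sop set. open U = (\<forall>x\<in>U. \<forall>\<^sub>F (x', y) in uniformity. x' = x \<longrightarrow> y \<in> U)"
    by (simp add: open_sop_def)
  show "(norm a = 0) = (a = 0)" by transfer simp
  show "norm (a + b) \<le> norm a + norm b" by transfer (rule norm_triangle_ineq)
  show "norm (r *\<^sub>R a) = \<bar>r\<bar> * norm a" by transfer simp
  show "a * b * c = a * (b * c)" by transfer (auto intro!: blinfun_eqI)
  show "1 * a = a" by transfer (auto intro!: blinfun_eqI)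
  show "a * 1 = a" by transfer (auto intro!: blinfun_eqI)
  show "(a + b) * c = a * c + b * c" by transfer (auto intro!: blinfun_eqI simp: blinfun.bilinear_simps)
  show "a * (b + c) = a * b + a * c" by transfer (auto intro!: blinfun_eqI simp: blinfun.bilinear_simps)
  show "(0::'a sop) \<noteq> 1" by transfer (rule sop_nontriv)
  show "r *\<^sub>R a * b = r *\<^sub>R (a * b)" by transfer (auto intro!: blinfun_eqI simp: blinfun.bilinear_simps)
  show "a * r *\<^sub>R b = r *\<^sub>R (a * b)" by transfer (auto intro!: blinfun_eqI simp: blinfun.bilinear_simps)
  show "norm (1::'a sop) = 1" by transfer (rule norm_blinfun_id)
  show "norm (a * b) \<le> norm a * norm b" by transfer (rule norm_blinfun_compose)
qed
end

lemma dist_sop_rep: "dist a b = dist (sop_rep a) (sop_rep b)"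
  unfolding dist_norm by transfer simp

instance sop :: (finite) banach
proof
  fix X :: "nat \<Rightarrow> 'a sop"
  assume "Cauchy X"
  then have "Cauchy (\<lambda>n. sop_rep (X n))"
    unfolding Cauchy_def dist_sop_rep by simp
  then obtain l where l: "(\<lambda>n. sop_rep (X n)) \<longlonglongrightarrow> l"
    using convergent_def Cauchy_convergent_iff by blast
  have "X \<longlonglongrightarrow> Sop l"
    using l unfolding lim_sequentially dist_sop_rep by (simp add: Sop_inverse)
  then show "convergent X" by (auto simp: convergent_def)
qed

definition ap :: "'a::finite sop \<Rightarrow> 'a cmat \<Rightarrow> 'a cmat" where
  "ap A X = blinfun_apply (sop_rep A) X"

lemma ap_mult: "ap (A * B) X = ap A (ap B X)"
  unfolding ap_def by transfer simp
lemma ap_one: "ap 1 X = X"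
  unfolding ap_def by transfer simp
lemma ap_add: "ap (A + B) X = ap A X + ap B X"
  unfolding ap_def by transfer (simp add: blinfun.bilinear_simps)
lemma ap_scaleR: "ap (r *\<^sub>R A) X = r *\<^sub>R ap A X"
  unfolding ap_def by transfer (simp add: blinfun.bilinear_simps)
lemma ap_zero: "ap 0 X = 0"
  unfolding ap_def by transfer simp
lemma bounded_linear_ap: "bounded_linear (\<lambda>A. ap A X)"
proof -
  have "bounded_linear (\<lambda>A. blinfun_apply A X)" by simp
  moreover have "bounded_linear (sop_rep :: 'a::finite sop \<Rightarrow> _)"
    apply (rule bounded_linear_intro[where K=1])
    by (transfer, simp)+
  ultimately show ?thesis unfolding ap_def
    using bounded_linear_compose by blast
qed
lemma ap_pow: "ap (A ^ k) X = ((ap A) ^^ k) X"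
  by (induction k arbitrary: X) (simp_all add: ap_one ap_mult)

lemma ap_Sop: "bounded_linear f \<Longrightarrow> ap (Sop (Blinfun f)) = f"
  unfolding ap_def by (simp add: Sop_inverse bounded_linear_Blinfun_apply)

lemma deriv_min:
  fixes A :: "'a::{real_normed_algebra_1,banach}" and \<psi> :: "'a \<Rightarrow> complex"
  assumes bl: "bounded_linear \<psi>" and ge: "\<forall>t. Re (\<psi> 1) \<le> Re (\<psi> (exp (t *\<^sub>R A)))"
  shows "Re (\<psi> A) = 0"
proof -
  have bl2: "bounded_linear (\<lambda>x. Re (\<psi> x))"
    using bounded_linear_compose[OF bounded_linear_Re bl] by simp
  have "((\<lambda>t. exp (t *\<^sub>R A)) has_vector_derivative exp (0 *\<^sub>R A) * A) (at 0)"
    by (rule exp_scaleR_has_vector_derivative_right)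
  then have "((\<lambda>t. exp (t *\<^sub>R A)) has_vector_derivative A) (at 0)" by simp
  from bounded_linear.has_vector_derivative[OF bl2 this]
  have "((\<lambda>t. Re (\<psi> (exp (t *\<^sub>R A)))) has_real_derivative Re (\<psi> A)) (at 0)"
    by (simp add: has_real_derivative_iff_has_vector_derivative)
  then show ?thesis
    by (rule DERIV_local_min[where d=1]) (use ge in auto)
qed



lemma scaleR_cscale: "r *\<^sub>R (X::'n::finite cmat) = cscale (complex_of_real r) X"
proof -
  have "\<And>i j. (r *\<^sub>R X)$i$j = complex_of_real r * X$i$j"
    by (simp only: vector_scaleR_component) (rule scaleR_conv_of_real)
  then show ?thesis unfolding cscale_def vec_eq_iff by simp
qed

lemma clinear_bounded: assumes "clinear_sop L" shows "bounded_linear L"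
proof -
  have "linear L"
    using assms unfolding clinear_sop_def
    by (intro linearI) (simp_all add: scaleR_cscale)
  then show ?thesis using linear_conv_bounded_linear by blast
qed

definition Lsop :: "('n::finite cmat \<Rightarrow> 'n cmat) \<Rightarrow> 'n sop" where
  "Lsop L = Sop (Blinfun L)"

lemma sop_exp_ap:
  assumes "bounded_linear L"
  shows "sop_exp t L = ap (exp (t *\<^sub>R Lsop L))"
proof
  fix X
  have s: "summable (\<lambda>n. (t *\<^sub>R Lsop L) ^ n /\<^sub>R fact n)"
    by (rule summable_exp_generic)
  have "ap (exp (t *\<^sub>R Lsop L)) X = (\<Sum>n. ap ((t *\<^sub>R Lsop L) ^ n /\<^sub>R fact n) X)"
    unfolding exp_def by (rule bounded_linear.suminf[OF bounded_linear_ap s])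
  also have "\<dots> = (\<Sum>n. (t ^ n / fact n) *\<^sub>R (L ^^ n) X)"
    by (simp add: ap_scaleR ap_pow Lsop_def ap_Sop[OF assms] scaleR_power divide_inverse mult.commute)
  finally show "sop_exp t L X = ap (exp (t *\<^sub>R Lsop L)) X"
    by (simp add: sop_exp_def)
qed

definition sesq :: "('i::finite \<Rightarrow> 'i \<Rightarrow> complex) \<Rightarrow> ('i \<Rightarrow> complex) \<Rightarrow> ('i \<Rightarrow> complex) \<Rightarrow> complex" where
  "sesq M w u = (\<Sum>p\<in>UNIV. \<Sum>q\<in>UNIV. cnj (w p) * M p q * u q)"

lemma sesq_add_l: "sesq M (\<lambda>p. u p + v p) w = sesq M u w + sesq M v w"
  by (simp add: sesq_def algebra_simps sum.distrib)
lemma sesq_add_r: "sesq M w (\<lambda>p. u p + v p) = sesq M w u + sesq M w v"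
  by (simp add: sesq_def algebra_simps sum.distrib)
lemma sesq_scale_l: "sesq M (\<lambda>p. c * u p) w = cnj c * sesq M u w"
  by (simp add: sesq_def algebra_simps sum_distrib_left)
lemma sesq_scale_r: "sesq M w (\<lambda>p. c * u p) = c * sesq M w u"
  by (simp add: sesq_def algebra_simps sum_distrib_left)
lemma sesq_diff_l: "sesq M (\<lambda>p. u p - v p) w = sesq M u w - sesq M v w"
  by (simp add: sesq_def algebra_simps sum_subtractf)
lemma sesq_diff_r: "sesq M w (\<lambda>p. u p - v p) = sesq M w u - sesq M w v"
  by (simp add: sesq_def algebra_simps sum_subtractf)

definition ev :: "'i \<Rightarrow> 'i \<Rightarrow> complex" where "ev p = (\<lambda>r. if r = p then 1 else 0)"

lemma sum_delta_r: "(\<Sum>s\<in>UNIV. f s * (if s = q then 1 else 0)) = (f (q::'i::finite) :: complex)"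
proof -
  have "(\<Sum>s\<in>UNIV. f s * (if s = q then 1 else 0)) = (\<Sum>s\<in>UNIV. if s = q then f s else 0)"
    by (rule sum.cong) auto
  then show ?thesis by simp
qed

lemma sum_delta_l: "(\<Sum>s\<in>UNIV. (if s = q then 1 else 0) * f s) = (f (q::'i::finite) :: complex)"
  using sum_delta_r[of f q] by (simp add: mult.commute)

lemma sesq_ev: "sesq M (ev p) (ev q) = M p q"
proof -
  have c: "\<And>r. cnj (ev p r) = ev p r" by (simp add: ev_def)
  have "sesq M (ev p) (ev q) = (\<Sum>r\<in>UNIV. ev p r * (\<Sum>s\<in>UNIV. M r s * ev q s))"
    by (simp add: sesq_def c sum_distrib_left mult.assoc)
  also have "\<dots> = (\<Sum>r\<in>UNIV. ev p r * M r q)"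
    unfolding ev_def by (simp only: sum_delta_r)
  also have "\<dots> = M p q" unfolding ev_def by (rule sum_delta_l)
  finally show ?thesis .
qed

lemma polar:
  assumes add: "\<And>u w. u \<in> S \<Longrightarrow> w \<in> S \<Longrightarrow> (\<lambda>p. u p + w p) \<in> S"
    and sc: "\<And>w. w \<in> S \<Longrightarrow> (\<lambda>p. \<i> * w p) \<in> S"
    and z: "\<And>w. w \<in> S \<Longrightarrow> sesq M w w = 0"
    and u: "u \<in> S" and w: "w \<in> S"
  shows "sesq M u w = 0"
proof -
  have iw: "(\<lambda>p. \<i> * w p) \<in> S" using sc w .
  have "0 = sesq M (\<lambda>p. u p + w p) (\<lambda>p. u p + w p)" using z add u w by simp
  also have "\<dots> = sesq M u w + sesq M w u" using z u w by (simp add: sesq_add_l sesq_add_r)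
  finally have 1: "sesq M u w + sesq M w u = 0" by simp
  have "0 = sesq M (\<lambda>p. u p + \<i> * w p) (\<lambda>p. u p + \<i> * w p)" using z add[OF u iw] by simp
  also have "\<dots> = \<i> * sesq M u w - \<i> * sesq M w u"
    using z u w by (simp add: sesq_add_l sesq_add_r sesq_scale_l sesq_scale_r algebra_simps)
  finally have 2: "sesq M u w = sesq M w u"
    by (simp add: algebra_simps)
  from 1 2 show ?thesis by simp
qed

lemma herm_from_real:
  assumes "\<And>w. Im (sesq M w w) = 0"
  shows "M p q = cnj (M q p)"
proof -
  have pp: "Im (M p p) = 0" using assms[of "ev p"] by (simp add: sesq_ev)
  have qq: "Im (M q q) = 0" using assms[of "ev q"] by (simp add: sesq_ev)
  have "sesq M (\<lambda>r. ev p r + ev q r) (\<lambda>r. ev p r + ev q r) = M p p + M p q + M q p + M q q"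
    by (simp add: sesq_add_l sesq_add_r sesq_ev)
  then have "Im (M p p + M p q + M q p + M q q) = 0" using assms[of "\<lambda>r. ev p r + ev q r"] by simp
  then have 1: "Im (M p q) + Im (M q p) = 0" using pp qq by simp
  have "sesq M (\<lambda>r. ev p r + \<i> * ev q r) (\<lambda>r. ev p r + \<i> * ev q r) = M p p + \<i> * M p q - \<i> * M q p + M q q"
    by (simp add: sesq_add_l sesq_add_r sesq_scale_l sesq_scale_r sesq_ev algebra_simps)
  with assms[of "\<lambda>r. ev p r + \<i> * ev q r"] have 2: "Re (M p q) - Re (M q p) = 0" using pp qq by simp
  show ?thesis using 1 2 by (simp add: complex_eq_iff)
qed

lemma cnj_mult_self_ge0: "0 \<le> cnj z * (z::complex)"
  by (simp add: less_eq_complex_def)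



definition Ch :: "('n::finite cmat \<Rightarrow> 'n cmat) \<Rightarrow> ('n \<times> 'n) \<Rightarrow> ('n \<times> 'n) \<Rightarrow> complex" where
  "Ch \<Lambda> p q = \<Lambda> (mat_unit (fst p) (fst q)) $ snd p $ snd q"

definition om :: "('n \<times> 'n) \<Rightarrow> complex" where
  "om p = (if fst p = snd p then 1 else 0)"

lemma sum_pair: "(\<Sum>p\<in>UNIV. f p) = (\<Sum>x\<in>(UNIV::'a::finite set). \<Sum>i\<in>(UNIV::'b::finite set). f (x,i))"
  by (simp add: sum.cartesian_product flip: UNIV_Times_UNIV)

lemma sum_if_and: "(\<Sum>i\<in>UNIV. \<Sum>j\<in>UNIV. f i * (if i = x \<and> j = y then 1 else 0) * g j) = (f (x::'a::finite) * g (y::'b::finite) :: complex)"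
proof -
  have "(\<Sum>i\<in>UNIV. \<Sum>j\<in>UNIV. f i * (if i = x \<and> j = y then 1 else 0) * g j)
      = (\<Sum>i\<in>UNIV. f i * (if i = x then 1 else 0)) * (\<Sum>j\<in>UNIV. (if j = y then 1 else 0) * g j)"
    by (simp add: sum_product) (rule sum.cong, simp, rule sum.cong, auto)
  also have "\<dots> = f x * g y" by (simp only: sum_delta_r sum_delta_l)
  finally show ?thesis .
qed

lemma cp_sesq:
  fixes \<Lambda> :: "'n::finite cmat \<Rightarrow> 'n cmat"
  assumes cp: "completely_positive \<Lambda>"
  shows "0 \<le> sesq (Ch \<Lambda>) w w"
proof -
  define N where "N = CARD('n)"
  obtain h where h: "bij_betw h {0..<N} (UNIV::'n set)"
    using ex_bij_betw_nat_finite[of "UNIV::'n set"] unfolding N_def by auto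
  have N1: "N \<ge> 1" unfolding N_def using finite_UNIV_card_ge_0[where 'a='n] by simp
  define X where "X = (\<lambda>a b. mat_unit (h a) (h b))"
  have "block_psd N X"
    unfolding block_psd_def
  proof
    fix v :: "nat \<Rightarrow> complex^'n"
    have "(\<Sum>a<N. \<Sum>b<N. \<Sum>i\<in>UNIV. \<Sum>j\<in>UNIV. cnj (v a $ i) * X a b $ i $ j * v b $ j)
        = (\<Sum>a<N. \<Sum>b<N. cnj (v a $ h a) * v b $ h b)"
      unfolding X_def mat_unit_def by (simp add: sum_if_and)
    also have "\<dots> = cnj (\<Sum>a<N. v a $ h a) * (\<Sum>b<N. v b $ h b)"
      by (simp add: sum_product cnj_sum)
    finally have eq: "(\<Sum>a<N. \<Sum>b<N. \<Sum>i\<in>UNIV. \<Sum>j\<in>UNIV. cnj (v a $ i) * X a b $ i $ j * v b $ j)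
        = cnj (\<Sum>a<N. v a $ h a) * (\<Sum>b<N. v b $ h b)" .
    show "0 \<le> (\<Sum>a<N. \<Sum>b<N. \<Sum>i\<in>UNIV. \<Sum>j\<in>UNIV. cnj (v a $ i) * X a b $ i $ j * v b $ j)"
      unfolding eq by (rule cnj_mult_self_ge0)
  qed
  then have "block_psd N (\<lambda>a b. \<Lambda> (X a b))" using cp N1 unfolding completely_positive_def by blast
  then have bp: "\<forall>v::nat \<Rightarrow> complex^'n. 0 \<le> (\<Sum>a<N. \<Sum>b<N. \<Sum>i\<in>UNIV. \<Sum>j\<in>UNIV. cnj (v a $ i) * \<Lambda> (X a b) $ i $ j * v b $ j)"
    unfolding block_psd_def .
  define T where "T = (\<lambda>x y. \<Sum>i\<in>UNIV. \<Sum>j\<in>UNIV. cnj (w (x, i)) * \<Lambda> (mat_unit x y) $ i $ j * w (y, j))"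
  have "0 \<le> (\<Sum>a<N. \<Sum>b<N. T (h a) (h b))"
    using bp[rule_format, of "\<lambda>a. \<chi> i. w (h a, i)"] unfolding T_def X_def by simp
  have r: "\<And>F. (\<Sum>a<N. F (h a)) = (\<Sum>x\<in>UNIV. F x)"
    using sum.reindex_bij_betw[OF h] by (simp add: lessThan_atLeast0)
  have "(\<Sum>a<N. \<Sum>b<N. T (h a) (h b)) = (\<Sum>a<N. \<Sum>y\<in>UNIV. T (h a) y)"
    by (rule sum.cong[OF refl r])
  also have "\<dots> = (\<Sum>x\<in>UNIV. \<Sum>y\<in>UNIV. T x y)" by (rule r)
  also have "\<dots> = sesq (Ch \<Lambda>) w w"
    unfolding sesq_def Ch_def T_def sum_pair[where f="\<lambda>p. \<Sum>q\<in>UNIV. _ p q"] sum_pair[where f="\<lambda>q. _ q"]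
    by (simp only: fst_conv snd_conv, rule sum.cong[OF refl], rule sum.swap)
  finally show ?thesis using \<open>0 \<le> (\<Sum>a<N. \<Sum>b<N. T (h a) (h b))\<close> by simp
qed




lemma bl_entry: "bounded_linear (\<lambda>M. c * (ap M Y $ i $ j) * d)"
proof -
  have 1: "bounded_linear (\<lambda>M. ap M Y $ i $ j)"
    by (rule bounded_linear_compose[OF bounded_linear_vec_nth bounded_linear_compose[OF bounded_linear_vec_nth bounded_linear_ap]])
  have 2: "bounded_linear (\<lambda>x::complex. c * x * d)"
    by (rule bounded_linear_compose[OF bounded_linear_mult_left bounded_linear_mult_right])
  show ?thesis by (rule bounded_linear_compose[OF 2 1])
qed

lemma bl_psi: "bounded_linear (\<lambda>M. sesq (Ch (ap M)) w u)"
  unfolding sesq_def Ch_def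
  by (intro bounded_linear_sum bl_entry)

lemma bl_times: "bounded_linear \<psi> \<Longrightarrow> bounded_linear (\<lambda>M. (c::complex) * \<psi> M)"
  by (rule bounded_linear_compose[OF bounded_linear_mult_right])

lemma Ch_id: "Ch (\<lambda>X. X) p q = om p * om q"
  by (auto simp: Ch_def om_def mat_unit_def)

lemma sesq_om: "sesq (\<lambda>p q. om p * om q) w w = cnj (\<Sum>r\<in>UNIV. om r * w r) * (\<Sum>r\<in>UNIV. om r * w r)"
proof -
  have c: "\<And>r. cnj (om r) = om r" by (simp add: om_def)
  show ?thesis
    unfolding sesq_def cnj_sum sum_product by (simp add: c mult.assoc mult.left_commute mult.commute)
qed

lemma Re_minus_i: "Re (- \<i> * z) = Im z" by simp

lemma gen_facts:
  fixes L :: "'n::finite cmat \<Rightarrow> 'n cmat"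
  assumes bl: "bounded_linear L" and cp: "\<forall>t. completely_positive (sop_exp t L)"
  shows "Im (sesq (Ch L) w w) = 0" and "(\<Sum>r\<in>UNIV. om r * w r) = 0 \<Longrightarrow> sesq (Ch L) w w = 0"
proof -
  define \<psi> where "\<psi> = (\<lambda>M. sesq (Ch (ap M)) w w)"
  have blp: "bounded_linear \<psi>" unfolding \<psi>_def by (rule bl_psi)
  have e: "\<And>t. \<psi> (exp (t *\<^sub>R Lsop L)) = sesq (Ch (sop_exp t L)) w w"
    unfolding \<psi>_def sop_exp_ap[OF bl] ..
  have pos: "\<And>t. 0 \<le> \<psi> (exp (t *\<^sub>R Lsop L))" unfolding e using cp cp_sesq by blast
  have apone: "ap 1 = (\<lambda>X. X)" by (rule ext) (simp add: ap_one)
  have one: "\<psi> 1 = \<psi> (exp (0 *\<^sub>R Lsop L))" by simp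
  have L: "\<psi> (Lsop L) = sesq (Ch L) w w" unfolding \<psi>_def Lsop_def ap_Sop[OF bl] ..
  have im: "\<And>t. Im (\<psi> (exp (t *\<^sub>R Lsop L))) = 0" using pos by (simp add: less_eq_complex_def)
  have "Re (- \<i> * \<psi> (Lsop L)) = 0"
    apply (rule deriv_min[OF bl_times[OF blp]])
    using im one by (simp only: Re_minus_i) simp
  then show i: "Im (sesq (Ch L) w w) = 0" using L by simp
  assume w: "(\<Sum>r\<in>UNIV. om r * w r) = 0"
  have "\<psi> 1 = 0" unfolding \<psi>_def apone
    by (simp add: sesq_om w Ch_id[abs_def])
  then have "Re (\<psi> (Lsop L)) = 0"
    using pos by (intro deriv_min[OF blp]) (simp add: less_eq_complex_def)
  then show "sesq (Ch L) w w = 0" using i L by (simp add: complex_eq_iff)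
qed



lemma sesq_ev_l: "sesq M (ev p) u = (\<Sum>s\<in>UNIV. M p s * u s)"
proof -
  have c: "\<And>r. cnj (ev p r) = ev p r" by (simp add: ev_def)
  have "sesq M (ev p) u = (\<Sum>r\<in>UNIV. ev p r * (\<Sum>s\<in>UNIV. M r s * u s))"
    by (simp add: sesq_def c sum_distrib_left mult.assoc)
  also have "\<dots> = (\<Sum>s\<in>UNIV. M p s * u s)" unfolding ev_def by (rule sum_delta_l)
  finally show ?thesis .
qed

lemma sesq_ev_r: "sesq M u (ev q) = (\<Sum>r\<in>UNIV. cnj (u r) * M r q)"
proof -
  have "sesq M u (ev q) = (\<Sum>r\<in>UNIV. \<Sum>s\<in>UNIV. (cnj (u r) * M r s) * ev q s)"
    by (simp add: sesq_def)
  also have "\<dots> = (\<Sum>r\<in>UNIV. cnj (u r) * M r q)" unfolding ev_def by (simp only: sum_delta_r)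
  finally show ?thesis .
qed

lemma proj_formula:
  fixes M :: "'i::finite \<Rightarrow> 'i \<Rightarrow> complex" and \<omega> :: "'i \<Rightarrow> complex"
  assumes z: "\<And>w. (\<Sum>r\<in>UNIV. \<omega> r * w r) = 0 \<Longrightarrow> sesq M w w = 0"
    and re: "\<And>r. cnj (\<omega> r) = \<omega> r" and c: "c = (\<Sum>r\<in>UNIV. \<omega> r * \<omega> r)" and c0: "c \<noteq> 0"
  shows "M p q = (\<omega> q / c) * sesq M (ev p) \<omega> + (\<omega> p / c) * sesq M \<omega> (ev q) - ((\<omega> p / c) * (\<omega> q / c)) * sesq M \<omega> \<omega>"
proof -
  define S where "S = {w. (\<Sum>r\<in>UNIV. \<omega> r * w r) = 0}"
  have cc: "cnj c = c" unfolding c cnj_sum by (simp add: re)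
  have Sadd: "\<And>u w. u \<in> S \<Longrightarrow> w \<in> S \<Longrightarrow> (\<lambda>p. u p + w p) \<in> S"
    unfolding S_def by (simp add: algebra_simps sum.distrib)
  have Ssc: "\<And>w. w \<in> S \<Longrightarrow> (\<lambda>p. \<i> * w p) \<in> S"
    unfolding S_def by (simp add: algebra_simps flip: sum_distrib_left)
  have Sz: "\<And>w. w \<in> S \<Longrightarrow> sesq M w w = 0" unfolding S_def using z by blast
  have omev: "\<And>p. (\<Sum>r\<in>UNIV. \<omega> r * ev p r) = \<omega> p" unfolding ev_def by (rule sum_delta_r)
  have inS: "\<And>p. (\<lambda>r. ev p r - (\<omega> p / c) * \<omega> r) \<in> S"
  proof -
    fix p
    have e1: "(\<Sum>r\<in>UNIV. \<omega> r * ((\<omega> p / c) * \<omega> r)) = (\<omega> p / c) * (\<Sum>r\<in>UNIV. \<omega> r * \<omega> r)"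
      by (simp add: sum_distrib_left mult.assoc mult.left_commute)
    have "(\<Sum>r\<in>UNIV. \<omega> r * (ev p r - (\<omega> p / c) * \<omega> r))
        = (\<Sum>r\<in>UNIV. \<omega> r * ev p r) - (\<Sum>r\<in>UNIV. \<omega> r * ((\<omega> p / c) * \<omega> r))"
      by (simp add: right_diff_distrib sum_subtractf)
    also have "\<dots> = \<omega> p - (\<omega> p / c) * c" by (simp only: omev e1 flip: c)
    finally have "(\<Sum>r\<in>UNIV. \<omega> r * (ev p r - (\<omega> p / c) * \<omega> r)) = \<omega> p - (\<omega> p / c) * c" .
    then show "(\<lambda>r. ev p r - (\<omega> p / c) * \<omega> r) \<in> S" unfolding S_def using c0 by simp
  qed
  have z0: "sesq M (\<lambda>r. ev p r - (\<omega> p / c) * \<omega> r) (\<lambda>r. ev q r - (\<omega> q / c) * \<omega> r) = 0"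
    by (rule polar[OF Sadd Ssc Sz inS inS])
  have e: "sesq M (\<lambda>r. ev p r - (\<omega> p / c) * \<omega> r) (\<lambda>r. ev q r - (\<omega> q / c) * \<omega> r)
     = sesq M (ev p) (ev q) - (\<omega> q / c) * sesq M (ev p) \<omega> - cnj (\<omega> p / c) * (sesq M \<omega> (ev q) - (\<omega> q / c) * sesq M \<omega> \<omega>)"
    by (simp only: sesq_diff_l sesq_diff_r sesq_scale_l sesq_scale_r) (simp only: algebra_simps)
  have cp: "cnj (\<omega> p / c) = \<omega> p / c" by (simp add: re cc)
  have alg: "\<And>m x y z a b. m - b * x - a * (y - b * z) = (0::complex) \<Longrightarrow> m = b * x + a * y - (a * b) * z"
    by (simp add: algebra_simps)
  have z1: "M p q - (\<omega> q / c) * sesq M (ev p) \<omega> - (\<omega> p / c) * (sesq M \<omega> (ev q) - (\<omega> q / c) * sesq M \<omega> \<omega>) = 0"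
    using z0 unfolding e cp sesq_ev .
  show ?thesis by (rule alg[OF z1])
qed

lemma clinear_linear: assumes "clinear_sop L" shows "linear L"
  using assms unfolding clinear_sop_def
  by (intro linearI) (simp_all add: scaleR_cscale)

lemma sum_delta_r': "(\<Sum>s\<in>UNIV. f s * (if q = s then 1 else 0)) = (f (q::'i::finite) :: complex)"
  using sum_delta_r[of f q] by (simp add: eq_commute[of q])

lemma mat_decomp: "(\<rho>::'n::finite cmat) = (\<Sum>a\<in>UNIV. \<Sum>b\<in>UNIV. cscale (\<rho>$a$b) (mat_unit a b))"
proof -
  have f: "\<And>i j. (\<Sum>a\<in>UNIV. \<Sum>b\<in>UNIV. cscale (\<rho>$a$b) (mat_unit a b))$i$j = \<rho>$i$j"
  proof -
    fix i j
    have "(\<Sum>a\<in>UNIV. \<Sum>b\<in>UNIV. cscale (\<rho>$a$b) (mat_unit a b))$i$j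
        = (\<Sum>a\<in>UNIV. \<Sum>b\<in>UNIV. \<rho>$a$b * (if i = a \<and> j = b then 1 else 0))"
      by (simp add: cscale_def mat_unit_def)
    also have "\<dots> = (\<Sum>a\<in>UNIV. if a = i then (\<Sum>b\<in>UNIV. if b = j then \<rho>$a$b else 0) else 0)"
      by (intro sum.cong refl) (auto simp: sum_delta_r')
    also have "\<dots> = \<rho>$i$j" by simp
    finally show "(\<Sum>a\<in>UNIV. \<Sum>b\<in>UNIV. cscale (\<rho>$a$b) (mat_unit a b))$i$j = \<rho>$i$j" .
  qed
  show ?thesis
  proof (rule vec_eq_iff[THEN iffD2], rule allI, rule vec_eq_iff[THEN iffD2], rule allI)
    fix i j
    show "\<rho>$i$j = (\<Sum>a\<in>UNIV. \<Sum>b\<in>UNIV. cscale (\<rho>$a$b) (mat_unit a b))$i$j"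
      by (rule sym[OF f])
  qed
qed

lemma L_from_units:
  fixes L :: "'n::finite cmat \<Rightarrow> 'n cmat"
  assumes cl: "clinear_sop L"
    and u: "\<And>a b i j. L (mat_unit a b) $ i $ j = K$i$a * (if b = j then 1 else 0) + (if a = i then 1 else 0) * cnj (K$j$b)"
  shows "L \<rho> = K ** \<rho> + \<rho> ** mat_adj K"
proof -
  have lin: "linear L" by (rule clinear_linear[OF cl])
  have sc: "\<And>c X. L (cscale c X) = cscale c (L X)" using cl unfolding clinear_sop_def by blast
  have "L \<rho> = (\<Sum>a\<in>UNIV. \<Sum>b\<in>UNIV. cscale (\<rho>$a$b) (L (mat_unit a b)))"
    by (subst mat_decomp) (simp add: linear_sum[OF lin] sc)
  moreover have "\<And>i j. (\<Sum>a\<in>UNIV. \<Sum>b\<in>UNIV. cscale (\<rho>$a$b) (L (mat_unit a b)))$i$j = (K ** \<rho> + \<rho> ** mat_adj K)$i$j"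
  proof -
    fix i j
    have "(\<Sum>a\<in>UNIV. \<Sum>b\<in>UNIV. cscale (\<rho>$a$b) (L (mat_unit a b)))$i$j
        = (\<Sum>a\<in>UNIV. \<Sum>b\<in>UNIV. \<rho>$a$b * (K$i$a * (if b = j then 1 else 0) + (if a = i then 1 else 0) * cnj (K$j$b)))"
      by (simp add: cscale_def u)
    also have "\<dots> = (\<Sum>a\<in>UNIV. \<Sum>b\<in>UNIV. (\<rho>$a$b * K$i$a) * (if b = j then 1 else 0))
        + (\<Sum>a\<in>UNIV. (if a = i then 1 else 0) * (\<Sum>b\<in>UNIV. \<rho>$a$b * cnj (K$j$b)))"
      by (simp add: algebra_simps sum.distrib sum_distrib_left)
    also have "\<dots> = (\<Sum>a\<in>UNIV. \<rho>$a$j * K$i$a) + (\<Sum>b\<in>UNIV. \<rho>$i$b * cnj (K$j$b))"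
      by (simp only: sum_delta_r sum_delta_l)
    also have "\<dots> = (K ** \<rho> + \<rho> ** mat_adj K)$i$j"
      by (simp add: matrix_matrix_mult_def mat_adj_def mult.commute)
    finally show "(\<Sum>a\<in>UNIV. \<Sum>b\<in>UNIV. cscale (\<rho>$a$b) (L (mat_unit a b)))$i$j = (K ** \<rho> + \<rho> ** mat_adj K)$i$j" .
  qed
  ultimately show ?thesis by (simp add: vec_eq_iff)
qed



lemma om_card: "(\<Sum>r\<in>(UNIV::('n::finite \<times> 'n) set). om r * om r) = (of_nat CARD('n) :: complex)"
proof -
  have "(\<Sum>r\<in>(UNIV::('n \<times> 'n) set). om r * om r) = (\<Sum>a\<in>(UNIV::'n set). \<Sum>i\<in>(UNIV::'n set). if a = i then 1 else 0)"
    by (subst sum_pair) (rule sum.cong[OF refl], rule sum.cong[OF refl], simp add: om_def)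
  also have "\<dots> = (\<Sum>a\<in>(UNIV::'n set). 1)" by simp
  finally show ?thesis by simp
qed

lemma keyform:
  fixes L :: "'n::finite cmat \<Rightarrow> 'n cmat"
  assumes cl: "clinear_sop L" and cp: "\<forall>t. completely_positive (sop_exp t L)"
  shows "\<exists>K. \<forall>\<rho>. L \<rho> = K ** \<rho> + \<rho> ** mat_adj K"
proof -
  have bl: "bounded_linear L" by (rule clinear_bounded[OF cl])
  define M where "M = Ch L"
  define n where "n = (of_nat CARD('n) :: complex)"
  have n0: "n \<noteq> 0" unfolding n_def by simp
  have cn: "cnj n = n" unfolding n_def by simp
  have herm: "\<And>p q. M p q = cnj (M q p)"
    unfolding M_def by (rule herm_from_real) (rule gen_facts(1)[OF bl cp])
  have hc: "\<And>p q. cnj (M p q) = M q p" using herm by (metis complex_cnj_cnj)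
  have z: "\<And>w. (\<Sum>r\<in>UNIV. om r * w r) = 0 \<Longrightarrow> sesq M w w = 0"
    unfolding M_def by (rule gen_facts(2)[OF bl cp])
  have re: "\<And>r. cnj (om r) = om r" by (simp add: om_def)
  have pf: "\<And>p q. M p q = (om q / n) * sesq M (ev p) om + (om p / n) * sesq M om (ev q) - ((om p / n) * (om q / n)) * sesq M om om"
    by (rule proj_formula[OF z re]) (simp_all add: om_card n_def)
  define R where "R = (\<lambda>p. sesq M (ev p) om)"
  define s where "s = sesq M om om"
  have SR: "\<And>q. sesq M om (ev q) = cnj (R q)"
    unfolding R_def sesq_ev_l sesq_ev_r cnj_sum
    by (simp add: re hc mult.commute)
  have sr: "cnj s = s"
  proof -
    have "cnj s = (\<Sum>p\<in>UNIV. \<Sum>q\<in>UNIV. om p * M q p * om q)"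
      unfolding s_def sesq_def cnj_sum by (simp add: re hc)
    also have "\<dots> = s"
      unfolding s_def sesq_def by (subst sum.swap) (simp add: re mult.commute mult.left_commute)
    finally show ?thesis .
  qed
  define K :: "'n cmat" where "K = (\<chi> i a. R (a, i) / n - (if a = i then s / (2 * n^2) else 0))"
  have u: "\<And>a b i j. L (mat_unit a b) $ i $ j = K$i$a * (if b = j then 1 else 0) + (if a = i then 1 else 0) * cnj (K$j$b)"
  proof -
    fix a b i j
    have "L (mat_unit a b) $ i $ j = M (a, i) (b, j)" by (simp add: M_def Ch_def)
    also have "\<dots> = (om (b,j) / n) * R (a,i) + (om (a,i) / n) * cnj (R (b,j)) - ((om (a,i) / n) * (om (b,j) / n)) * s"
      using pf[of "(a,i)" "(b,j)"] unfolding R_def s_def SR[unfolded R_def] .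
    also have "\<dots> = K$i$a * (if b = j then 1 else 0) + (if a = i then 1 else 0) * cnj (K$j$b)"
      unfolding K_def using n0 cn sr
      by (auto simp: om_def field_simps power2_eq_square)
    finally show "L (mat_unit a b) $ i $ j = K$i$a * (if b = j then 1 else 0) + (if a = i then 1 else 0) * cnj (K$j$b)" .
  qed
  show ?thesis using L_from_units[OF cl u] by blast
qed



lemma cscale_mult_l: "cscale c A ** B = cscale c (A ** (B::'n::finite cmat))"
  by (simp add: vec_eq_iff cscale_def matrix_matrix_mult_def sum_distrib_left mult.assoc)
lemma cscale_mult_r: "A ** cscale c B = cscale c (A ** (B::'n::finite cmat))"
  by (simp add: vec_eq_iff cscale_def matrix_matrix_mult_def sum_distrib_left mult.left_commute)
lemma matrix_add_rdistrib': "(A + B) ** C = A ** C + B ** (C::'n::finite cmat)"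
  by (simp add: vec_eq_iff matrix_matrix_mult_def sum.distrib distrib_right)
lemma matrix_diff_rdistrib': "(A - B) ** C = A ** C - B ** (C::'n::finite cmat)"
  by (simp add: vec_eq_iff matrix_matrix_mult_def sum_subtractf left_diff_distrib)
lemma matrix_diff_ldistrib': "C ** (A - B) = C ** A - C ** (B::'n::finite cmat)"
  by (simp add: vec_eq_iff matrix_matrix_mult_def sum_subtractf right_diff_distrib)
lemma cscale_cscale: "cscale a (cscale b X) = cscale (a * b) (X::'n::finite cmat)"
  by (simp add: vec_eq_iff cscale_def mult.assoc)
lemma cscale_add: "cscale c (X + Y) = cscale c X + cscale c (Y::'n::finite cmat)"
  by (simp add: vec_eq_iff cscale_def distrib_left)
lemma cscale_diff: "cscale c (X - Y) = cscale c X - cscale c (Y::'n::finite cmat)"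
  by (simp add: vec_eq_iff cscale_def right_diff_distrib)
lemma cscale_nth: "cscale c X $ i $ j = c * X $ i $ j"
  by (simp add: cscale_def)

lemma scaleR_mult_l: "(r *\<^sub>R (A::'n::finite cmat)) ** B = r *\<^sub>R (A ** (B::'n::finite cmat))"
  by (simp add: scaleR_cscale cscale_mult_l)
lemma scaleR_mult_r: "(A::'n::finite cmat) ** (r *\<^sub>R B) = r *\<^sub>R (A ** (B::'n::finite cmat))"
  by (simp add: scaleR_cscale cscale_mult_r)

lemma bl_lmul: "bounded_linear (\<lambda>X::'n::finite cmat. (C::'n cmat) ** X)"
proof -
  have "linear (\<lambda>X::'n::finite cmat. (C::'n cmat) ** X)"
    by (intro linearI) (simp_all add: matrix_add_ldistrib scaleR_mult_r)
  then show ?thesis using linear_conv_bounded_linear by blast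
qed
lemma bl_rmul: "bounded_linear (\<lambda>X::'n::finite cmat. X ** (C::'n cmat))"
proof -
  have "linear (\<lambda>X::'n::finite cmat. X ** (C::'n cmat))"
    by (intro linearI) (simp_all add: matrix_add_rdistrib' scaleR_mult_l)
  then show ?thesis using linear_conv_bounded_linear by blast
qed

lemma sop_eqI: "(\<And>X. ap P X = ap Q X) \<Longrightarrow> P = Q"
  unfolding ap_def by (metis blinfun_eqI sop_rep_inject)

definition lm :: "'n::finite cmat \<Rightarrow> 'n sop" where "lm C = Sop (Blinfun (\<lambda>X. C ** X))"
definition rm :: "'n::finite cmat \<Rightarrow> 'n sop" where "rm C = Sop (Blinfun (\<lambda>X. X ** C))"

lemma ap_lm: "ap (lm C) X = C ** X" unfolding lm_def ap_Sop[OF bl_lmul] ..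
lemma ap_rm: "ap (rm C) X = X ** C" unfolding rm_def ap_Sop[OF bl_rmul] ..

lemma mat_pow_Suc': "mat_pow C (Suc n) = mat_pow C n ** C"
  by (induction n) (simp_all add: matrix_mul_assoc)

lemma ap_lm_pow: "ap (lm C ^ n) Y = mat_pow C n ** Y"
  unfolding ap_pow by (induction n arbitrary: Y) (simp_all add: ap_lm matrix_mul_assoc)
lemma ap_rm_pow: "ap (rm C ^ n) Y = Y ** mat_pow C n"
  unfolding ap_pow
proof (induction n)
  case 0
  then show ?case by simp
next
  case (Suc n)
  have "(ap (rm C) ^^ Suc n) Y = ap (rm C) ((ap (rm C) ^^ n) Y)" by (simp only: funpow.simps comp_apply)
  also have "\<dots> = (Y ** mat_pow C n) ** C" by (simp only: Suc ap_rm)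
  also have "\<dots> = Y ** mat_pow C (Suc n)" by (simp only: mat_pow_Suc' matrix_mul_assoc)
  finally show ?case .
qed

lemma mat_exp_summable: "summable (\<lambda>n. (1 / fact n) *\<^sub>R mat_pow (C::'n::finite cmat) n)"
proof -
  have "summable (\<lambda>n. ap (lm C ^ n /\<^sub>R fact n) (mat 1))"
    by (rule bounded_linear.summable[OF bounded_linear_ap summable_exp_generic])
  moreover have "\<And>n. ap (lm C ^ n /\<^sub>R fact n) (mat 1) = (1 / fact n) *\<^sub>R mat_pow C n"
    by (simp add: ap_scaleR ap_lm_pow divide_inverse)
  ultimately show ?thesis by simp
qed

lemma ap_exp_lm: "ap (exp (lm C)) Y = mat_exp C ** Y"
proof -
  have "ap (exp (lm C)) Y = (\<Sum>n. ap (lm C ^ n /\<^sub>R fact n) Y)"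
    unfolding exp_def by (rule bounded_linear.suminf[OF bounded_linear_ap summable_exp_generic])
  also have "\<dots> = (\<Sum>n. ((1 / fact n) *\<^sub>R mat_pow C n) ** Y)"
    by (simp add: ap_scaleR ap_lm_pow divide_inverse scaleR_mult_l)
  also have "\<dots> = mat_exp C ** Y"
    unfolding mat_exp_def by (rule bounded_linear.suminf[OF bl_rmul mat_exp_summable, symmetric])
  finally show ?thesis .
qed

lemma ap_exp_rm: "ap (exp (rm C)) Y = Y ** mat_exp C"
proof -
  have "ap (exp (rm C)) Y = (\<Sum>n. ap (rm C ^ n /\<^sub>R fact n) Y)"
    unfolding exp_def by (rule bounded_linear.suminf[OF bounded_linear_ap summable_exp_generic])
  also have "\<dots> = (\<Sum>n. Y ** ((1 / fact n) *\<^sub>R mat_pow C n))"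
    by (simp add: ap_scaleR ap_rm_pow divide_inverse scaleR_mult_r)
  also have "\<dots> = Y ** mat_exp C"
    unfolding mat_exp_def by (rule bounded_linear.suminf[OF bl_lmul mat_exp_summable, symmetric])
  finally show ?thesis .
qed

lemma exp_formula:
  fixes L :: "'n::finite cmat \<Rightarrow> 'n cmat"
  assumes bl: "bounded_linear L" and f: "\<And>\<rho>. L \<rho> = A ** \<rho> + \<rho> ** B"
  shows "sop_exp t L \<rho> = mat_exp (cscale (of_real t) A) ** \<rho> ** mat_exp (cscale (of_real t) B)"
proof -
  have e1: "t *\<^sub>R Lsop L = lm (cscale (of_real t) A) + rm (cscale (of_real t) B)"
    by (rule sop_eqI) (simp add: ap_scaleR ap_add ap_lm ap_rm Lsop_def ap_Sop[OF bl] f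
        scaleR_cscale cscale_mult_l cscale_mult_r cscale_add)
  have c: "lm (cscale (of_real t) A) * rm (cscale (of_real t) B) = rm (cscale (of_real t) B) * lm (cscale (of_real t) A)"
    by (rule sop_eqI) (simp add: ap_mult ap_lm ap_rm matrix_mul_assoc)
  have "sop_exp t L \<rho> = ap (exp (t *\<^sub>R Lsop L)) \<rho>" by (simp add: sop_exp_ap[OF bl])
  also have "\<dots> = ap (exp (lm (cscale (of_real t) A)) * exp (rm (cscale (of_real t) B))) \<rho>"
    unfolding e1 exp_add_commuting[OF c] ..
  also have "\<dots> = mat_exp (cscale (of_real t) A) ** \<rho> ** mat_exp (cscale (of_real t) B)"
    by (simp add: ap_mult ap_exp_lm ap_exp_rm matrix_mul_assoc)
  finally show ?thesis .
qed



lemma sum_delta_l': "(\<Sum>s\<in>UNIV. (if q = s then 1 else 0) * f s) = (f (q::'i::finite) :: complex)"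
  using sum_delta_l[of q f] by (simp add: eq_commute[of q])

lemma mul_unit_r: "(A ** mat_unit b d) $ a $ c = A$a$b * (if c = d then 1 else (0::complex))"
  by (cases "c = d") (auto simp: matrix_matrix_mult_def mat_unit_def sum_delta_r)
lemma mul_unit_l: "(mat_unit b d ** B) $ a $ c = (if a = b then 1 else (0::complex)) * B$d$c"
  by (cases "a = b") (auto simp: matrix_matrix_mult_def mat_unit_def sum_delta_l)

lemma sum2_delta: "(\<Sum>x\<in>UNIV. \<Sum>y\<in>UNIV. (if x = c \<and> y = d then 1 else 0) * g x y) = (g (c::'a::finite) (d::'b::finite) :: complex)"
proof -
  have "(\<Sum>x\<in>UNIV. \<Sum>y\<in>UNIV. (if x = c \<and> y = d then 1 else 0) * g x y)
      = (\<Sum>x\<in>UNIV. (if x = c then 1 else 0) * (\<Sum>y\<in>UNIV. (if y = d then 1 else 0) * g x y))"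
    by (simp add: sum_distrib_left) (intro sum.cong refl, auto)
  also have "\<dots> = g c d" by (simp only: sum_delta_l)
  finally show ?thesis .
qed

lemma trace_cscale: "trace (cscale c X) = c * trace (X::'n::finite cmat)"
  by (simp add: trace_def cscale_def sum_distrib_left)
lemma trace_zero: "trace (0::'n::finite cmat) = 0"
  by (simp add: trace_def)

lemma solve_lin:
  assumes n0: "n \<noteq> 0" and h: "n * x + y = (0::complex)" shows "x = - y / n"
proof -
  have nx: "n * x = - y" using h by (simp add: eq_neg_iff_add_eq_0)
  have "x = (n * x) / n" using n0 by simp
  also have "\<dots> = - y / n" by (simp only: nx)
  finally show ?thesis .
qed

lemma psi_zero:
  fixes \<Psi> :: "'n::finite cmat \<Rightarrow> 'n cmat"
  assumes f: "\<And>\<rho>. \<Psi> \<rho> = A ** \<rho> + \<rho> ** B" and st: "supported_trace_zero (jamiolkowski \<Psi>)"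
  shows "\<Psi> = (\<lambda>_. 0)"
proof -
  define n where "n = (of_nat CARD('n) :: complex)"
  have n0: "n \<noteq> 0" unfolding n_def by simp
  have u: "\<And>b d a c. \<Psi> (mat_unit b d) $ a $ c = A$a$b * (if c = d then 1 else 0) + (if a = b then 1 else 0) * B$d$c"
    by (simp add: f mul_unit_r mul_unit_l)
  have j1: "jamiolkowski \<Psi> (mat 1) = 0" and j2: "\<And>X. trace (jamiolkowski \<Psi> X) = 0"
    using st unfolding supported_trace_zero_def by auto
  have hA: "\<And>a b. n * A$a$b + (if a = b then trace B else 0) = 0"
  proof -
    fix a b
    have "jamiolkowski \<Psi> (mat 1) $ a $ b = (\<Sum>c\<in>UNIV. \<Sum>d\<in>UNIV. (if c = d then 1 else 0) * \<Psi> (mat_unit b d) $ a $ c)"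
      by (simp add: jamiolkowski_def mat_def)
    also have "\<dots> = (\<Sum>c\<in>UNIV. \<Psi> (mat_unit b c) $ a $ c)" by (simp only: sum_delta_l')
    also have "\<dots> = (\<Sum>c\<in>UNIV. A$a$b + (if a = b then 1 else 0) * B$c$c)" by (simp add: u)
    also have "\<dots> = n * A$a$b + (if a = b then trace B else 0)"
      by (cases "a = b") (simp_all add: sum.distrib trace_def n_def)
    finally show "n * A$a$b + (if a = b then trace B else 0) = 0" using j1 by simp
  qed
  have hB: "\<And>d c. (if c = d then trace A else 0) + n * B$d$c = 0"
  proof -
    fix c d
    have "trace (jamiolkowski \<Psi> (mat_unit c d)) = (\<Sum>a\<in>UNIV. \<Sum>x\<in>UNIV. \<Sum>y\<in>UNIV. (if x = c \<and> y = d then 1 else 0) * \<Psi> (mat_unit a y) $ a $ x)"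
      by (simp add: trace_def jamiolkowski_def mat_unit_def)
    also have "\<dots> = (\<Sum>a\<in>UNIV. \<Psi> (mat_unit a d) $ a $ c)" by (simp only: sum2_delta)
    also have "\<dots> = (\<Sum>a\<in>UNIV. A$a$a * (if c = d then 1 else 0) + B$d$c)" by (simp add: u)
    also have "\<dots> = (if c = d then trace A else 0) + n * B$d$c"
      by (cases "c = d") (simp_all add: sum.distrib trace_def n_def)
    finally show "(if c = d then trace A else 0) + n * B$d$c = 0" using j2 by simp
  qed
  have Aeq: "A = cscale (- trace B / n) (mat 1)"
  proof -
    have "\<And>a b. A$a$b = (- trace B / n) * (if a = b then 1 else 0)"
    proof -
      fix a b
      show "A$a$b = (- trace B / n) * (if a = b then 1 else 0)"
        using solve_lin[OF n0 hA[of a b]] by (cases "a = b") simp_all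
    qed
    then show ?thesis by (simp add: vec_eq_iff cscale_def mat_def)
  qed
  have Beq: "B = cscale (- trace A / n) (mat 1)"
  proof -
    have "\<And>d c. B$d$c = (- trace A / n) * (if d = c then 1 else 0)"
    proof -
      fix d c
      have "n * B$d$c + (if c = d then trace A else 0) = 0" using hB[of c d] by (simp add: add.commute)
      from solve_lin[OF n0 this]
      show "B$d$c = (- trace A / n) * (if d = c then 1 else 0)"
        by (cases "c = d") auto
    qed
    then show ?thesis by (simp add: vec_eq_iff cscale_def mat_def)
  qed
  have trA: "trace A = - trace B"
    using n0 by (subst Aeq) (simp add: trace_cscale n_def trace_I)
  show ?thesis
  proof
    fix \<rho>
    have "\<Psi> \<rho> = cscale (- trace B / n) \<rho> + cscale (- trace A / n) \<rho>"
      unfolding f by (subst Aeq, subst Beq) (simp add: cscale_mult_l cscale_mult_r)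
    also have "\<dots> = 0" by (simp add: trA vec_eq_iff cscale_def field_simps)
    finally show "\<Psi> \<rho> = 0" .
  qed
qed



lemma bl_trace_ap: "bounded_linear (\<lambda>M. trace (ap M Y))"
proof -
  have "\<And>i. bounded_linear (\<lambda>M. 1 * (ap M Y $ i $ i) * 1)" by (rule bl_entry)
  then have "\<And>i. bounded_linear (\<lambda>M. ap M Y $ i $ i)" by simp
  then show ?thesis unfolding trace_def by (intro bounded_linear_sum)
qed

lemma trace_neg: "trace (- X) = - trace (X::'n::finite cmat)"
  by (simp add: trace_def sum_negf)

lemma psd_rank1: "psd (\<chi> i j. (x::complex^'n::finite)$i * cnj (x$j))"
  unfolding psd_def
proof
  fix z :: "complex^'n"
  define S where "S = (\<Sum>j\<in>UNIV. cnj (x$j) * z$j)"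
  have "(\<Sum>i\<in>UNIV. \<Sum>j\<in>UNIV. cnj (z$i) * (\<chi> i j. x$i * cnj (x$j))$i$j * z$j) = cnj S * S"
    unfolding S_def cnj_sum sum_product by (simp add: mult_ac)
  then show "0 \<le> (\<Sum>i\<in>UNIV. \<Sum>j\<in>UNIV. cnj (z$i) * (\<chi> i j. x$i * cnj (x$j))$i$j * z$j)"
    using cnj_mult_self_ge0 by simp
qed

lemma G_zero:
  fixes L :: "'n::finite cmat \<Rightarrow> 'n cmat"
  assumes bl: "bounded_linear L" and tn: "\<forall>t. trace_nonincreasing (sop_exp t L)"
    and f: "\<And>\<rho>. L \<rho> = 0 - (G ** \<rho> + \<rho> ** G) - cscale \<i> (H ** \<rho> - \<rho> ** H)"
  shows "G = 0"
proof -
  have tr0: "\<And>x::complex^'n. trace (G ** (\<chi> i j. x$i * cnj (x$j))) = 0"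
  proof -
    fix x :: "complex^'n"
    define \<rho> :: "'n cmat" where "\<rho> = (\<chi> i j. x$i * cnj (x$j))"
    have psd: "psd \<rho>" unfolding \<rho>_def by (rule psd_rank1)
    define \<psi> where "\<psi> = (\<lambda>M. trace (ap M \<rho>))"
    have blp: "bounded_linear \<psi>" unfolding \<psi>_def by (rule bl_trace_ap)
    have e: "\<And>t. \<psi> (exp (t *\<^sub>R Lsop L)) = trace (sop_exp t L \<rho>)"
      unfolding \<psi>_def sop_exp_ap[OF bl] ..
    have le: "\<And>t. trace (sop_exp t L \<rho>) \<le> trace \<rho>"
      using tn psd unfolding trace_nonincreasing_def by blast
    have one: "\<psi> 1 = trace \<rho>" unfolding \<psi>_def by (simp add: ap_one)
    have L: "\<psi> (Lsop L) = trace (L \<rho>)" unfolding \<psi>_def Lsop_def ap_Sop[OF bl] ..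
    have "Re ((-1) * \<psi> (Lsop L)) = 0"
      by (rule deriv_min[OF bl_times[OF blp]]) (use le in \<open>simp add: e one less_eq_complex_def\<close>)
    moreover have "Re ((- \<i>) * \<psi> (Lsop L)) = 0"
      by (rule deriv_min[OF bl_times[OF blp]]) (use le in \<open>simp add: e one less_eq_complex_def\<close>)
    ultimately have "trace (L \<rho>) = 0" using L by (simp add: complex_eq_iff)
    moreover have "trace (L \<rho>) = - 2 * trace (G ** \<rho>)"
      by (simp add: f trace_sub trace_add trace_cscale trace_zero trace_neg trace_mul_sym[of \<rho>])
    ultimately show "trace (G ** (\<chi> i j. x$i * cnj (x$j))) = 0" unfolding \<rho>_def by simp
  qed
  define Gf where "Gf = (\<lambda>i k. G$i$k)"
  have z: "\<And>w. sesq Gf w w = 0"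
  proof -
    fix w :: "'n \<Rightarrow> complex"
    have "sesq Gf w w = trace (G ** (\<chi> i j. (vec_lambda w)$i * cnj ((vec_lambda w)$j)))"
      unfolding sesq_def Gf_def trace_def matrix_matrix_mult_def
      by (simp add: mult_ac)
    then show "sesq Gf w w = 0" using tr0[of "vec_lambda w"] by simp
  qed
  have "\<And>p q. G$p$q = 0"
  proof -
    fix p q
    have "sesq Gf (ev p) (ev q) = 0" by (rule polar[of UNIV]) (simp_all add: z)
    then show "G$p$q = 0" by (simp add: sesq_ev Gf_def)
  qed
  then show ?thesis by (simp add: vec_eq_iff)
qed

lemma exist_mp:
  fixes L :: "'n::finite cmat \<Rightarrow> 'n cmat"
  assumes cl: "clinear_sop L" and K: "\<And>\<rho>. L \<rho> = K ** \<rho> + \<rho> ** mat_adj K"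
  shows "\<exists>G H. minimal_presentation L (\<lambda>_. 0) G H"
proof -
  define n where "n = (of_nat CARD('n) :: complex)"
  have n0: "n \<noteq> 0" unfolding n_def by simp
  define G where "G = cscale (-1/2) (K + mat_adj K)"
  define H0 where "H0 = cscale (\<i>/2) (K - mat_adj K)"
  define \<tau> where "\<tau> = trace H0 / n"
  define H where "H = H0 - cscale \<tau> (mat 1)"
  have ctr: "cnj (trace H0) = trace H0"
    unfolding H0_def trace_def cnj_sum
    by (intro sum.cong refl) (simp add: cscale_def mat_adj_def algebra_simps)
  have ct: "cnj \<tau> = \<tau>" unfolding \<tau>_def n_def by (simp add: ctr)
  have hG: "hermitian G"
    unfolding hermitian_def G_def by (simp add: vec_eq_iff cscale_def mat_adj_def algebra_simps)
  have hH: "hermitian H"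
    unfolding hermitian_def H_def H0_def
    by (simp add: vec_eq_iff cscale_def mat_adj_def mat_def ct algebra_simps)
  have tH: "trace H = 0"
    unfolding H_def using n0 by (simp add: trace_sub trace_cscale trace_I \<tau>_def n_def)
  have cl0: "clinear_sop (\<lambda>_::'n cmat. 0::'n cmat)"
    by (simp add: clinear_sop_def cscale_def vec_eq_iff)
  have cp0: "completely_positive (\<lambda>_::'n cmat. 0::'n cmat)"
    by (simp add: completely_positive_def block_psd_def)
  have j0: "jamiolkowski (\<lambda>_::'n cmat. 0::'n cmat) = (\<lambda>_. 0)"
    by (rule ext) (simp add: jamiolkowski_def vec_eq_iff)
  have st0: "supported_trace_zero (jamiolkowski (\<lambda>_::'n cmat. 0::'n cmat))"
    unfolding j0 supported_trace_zero_def by (simp add: trace_zero)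
  have form: "\<And>\<rho>. L \<rho> = 0 - (G ** \<rho> + \<rho> ** G) - cscale \<i> (H ** \<rho> - \<rho> ** H)"
  proof -
    fix \<rho> :: "'n cmat"
    have "0 - (G ** \<rho> + \<rho> ** G) - cscale \<i> (H ** \<rho> - \<rho> ** H)
      = 0 - (cscale (-1/2) (K ** \<rho> + mat_adj K ** \<rho>) + cscale (-1/2) (\<rho> ** K + \<rho> ** mat_adj K))
          - cscale \<i> ((cscale (\<i>/2) (K ** \<rho> - mat_adj K ** \<rho>) - cscale \<tau> \<rho>)
                     - (cscale (\<i>/2) (\<rho> ** K - \<rho> ** mat_adj K) - cscale \<tau> \<rho>))"
      unfolding G_def H_def H0_def
      by (simp only: cscale_mult_l cscale_mult_r matrix_add_rdistrib' matrix_add_ldistrib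
          matrix_diff_rdistrib' matrix_diff_ldistrib' matrix_mul_lid matrix_mul_rid)
    also have "\<dots> = K ** \<rho> + \<rho> ** mat_adj K"
      by (simp add: vec_eq_iff cscale_def algebra_simps)
    finally show "L \<rho> = 0 - (G ** \<rho> + \<rho> ** G) - cscale \<i> (H ** \<rho> - \<rho> ** H)" by (simp add: K)
  qed
  have "minimal_presentation L (\<lambda>_. 0) G H"
    unfolding minimal_presentation_def using cl0 cp0 hG hH tH st0 form by simp
  then show ?thesis by blast
qed



lemma matrix_zero_mult_l: "(0::'n::finite cmat) ** X = 0"
  by (simp add: vec_eq_iff matrix_matrix_mult_def)
lemma matrix_zero_mult_r: "X ** (0::'n::finite cmat) = 0"
  by (simp add: vec_eq_iff matrix_matrix_mult_def)

theorem mainTheorem7: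
  fixes L :: "'n::finite cmat \<Rightarrow> 'n cmat"
  assumes "clinear_sop L"
    and "\<forall>t::real. completely_positive (sop_exp t L)"
  shows "(\<exists>G H. minimal_presentation L (\<lambda>_. 0) G H)
    \<and> (\<forall>\<Psi> G H. minimal_presentation L \<Psi> G H \<longrightarrow>
          \<Psi> = (\<lambda>_. 0) \<and>
          ((\<forall>t::real. trace_nonincreasing (sop_exp t L)) \<longrightarrow>
             G = 0 \<and>
             (\<forall>(t::real) \<rho>. sop_exp t L \<rho> =
                mat_exp (cscale (- \<i> * of_real t) H) ** \<rho> ** mat_exp (cscale (\<i> * of_real t) H))))"
proof -
  have bl: "bounded_linear L" by (rule clinear_bounded[OF assms(1)])
  obtain K where K: "\<And>\<rho>. L \<rho> = K ** \<rho> + \<rho> ** mat_adj K"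
    using keyform[OF assms] by blast
  have part1: "\<exists>G H. minimal_presentation L (\<lambda>_. 0) G H"
    by (rule exist_mp[OF assms(1) K])
  have part2: "\<forall>\<Psi> G H. minimal_presentation L \<Psi> G H \<longrightarrow>
          \<Psi> = (\<lambda>_. 0) \<and>
          ((\<forall>t::real. trace_nonincreasing (sop_exp t L)) \<longrightarrow>
             G = 0 \<and>
             (\<forall>(t::real) \<rho>. sop_exp t L \<rho> =
                mat_exp (cscale (- \<i> * of_real t) H) ** \<rho> ** mat_exp (cscale (\<i> * of_real t) H)))"
  proof (intro allI impI)
    fix \<Psi> G H
    assume mp: "minimal_presentation L \<Psi> G H"
    then have st: "supported_trace_zero (jamiolkowski \<Psi>)"
      and fL: "\<And>\<rho>. L \<rho> = \<Psi> \<rho> - (G ** \<rho> + \<rho> ** G) - cscale \<i> (H ** \<rho> - \<rho> ** H)"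
      unfolding minimal_presentation_def by auto
    have f\<Psi>: "\<And>\<rho>. \<Psi> \<rho> = (K + G + cscale \<i> H) ** \<rho> + \<rho> ** (mat_adj K + G - cscale \<i> H)"
    proof -
      fix \<rho> :: "'n cmat"
      have "\<Psi> \<rho> = L \<rho> + (G ** \<rho> + \<rho> ** G) + cscale \<i> (H ** \<rho> - \<rho> ** H)"
        using fL[of \<rho>] by (simp add: algebra_simps)
      also have "\<dots> = (K + G + cscale \<i> H) ** \<rho> + \<rho> ** (mat_adj K + G - cscale \<i> H)"
        by (simp add: K matrix_add_rdistrib' matrix_add_ldistrib matrix_diff_ldistrib'
            cscale_mult_l cscale_mult_r cscale_diff algebra_simps)
      finally show "\<Psi> \<rho> = (K + G + cscale \<i> H) ** \<rho> + \<rho> ** (mat_adj K + G - cscale \<i> H)" .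
    qed
    have \<Psi>0: "\<Psi> = (\<lambda>_. 0)" by (rule psi_zero[OF f\<Psi> st])
    show "\<Psi> = (\<lambda>_. 0) \<and>
          ((\<forall>t::real. trace_nonincreasing (sop_exp t L)) \<longrightarrow>
             G = 0 \<and>
             (\<forall>(t::real) \<rho>. sop_exp t L \<rho> =
                mat_exp (cscale (- \<i> * of_real t) H) ** \<rho> ** mat_exp (cscale (\<i> * of_real t) H)))"
    proof (intro conjI impI)
      show "\<Psi> = (\<lambda>_. 0)" by (rule \<Psi>0)
      assume tn: "\<forall>t::real. trace_nonincreasing (sop_exp t L)"
      have f0: "\<And>\<rho>. L \<rho> = 0 - (G ** \<rho> + \<rho> ** G) - cscale \<i> (H ** \<rho> - \<rho> ** H)"
        using fL \<Psi>0 by simp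
      have G0: "G = 0" by (rule G_zero[OF bl tn f0])
      show "G = 0" by (rule G0)
      have fA: "\<And>\<rho>. L \<rho> = cscale (- \<i>) H ** \<rho> + \<rho> ** cscale \<i> H"
      proof -
        fix \<rho> :: "'n cmat"
        have "L \<rho> = 0 - (0 ** \<rho> + \<rho> ** 0) - cscale \<i> (H ** \<rho> - \<rho> ** H)" using f0[of \<rho>] G0 by simp
        also have "\<dots> = cscale (- \<i>) H ** \<rho> + \<rho> ** cscale \<i> H"
          by (simp only: matrix_zero_mult_l matrix_zero_mult_r cscale_mult_l cscale_mult_r) (simp add: vec_eq_iff cscale_def algebra_simps)
        finally show "L \<rho> = cscale (- \<i>) H ** \<rho> + \<rho> ** cscale \<i> H" .
      qed
      show "\<forall>(t::real) \<rho>. sop_exp t L \<rho> =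
                mat_exp (cscale (- \<i> * of_real t) H) ** \<rho> ** mat_exp (cscale (\<i> * of_real t) H)"
      proof (intro allI)
        fix t :: real and \<rho> :: "'n cmat"
        show "sop_exp t L \<rho> = mat_exp (cscale (- \<i> * of_real t) H) ** \<rho> ** mat_exp (cscale (\<i> * of_real t) H)"
          using exp_formula[OF bl fA, of t \<rho>] by (simp add: cscale_cscale mult.commute)
      qed
    qed
  qed
  show ?thesis using part1 part2 by blast
qed


end
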